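(* Let $G$ be a $6$-regular graph, $\mathcal S$ a canonical path partition of $G$, and let $x_1,x_2\in V_2$ be path neighbors on a path component $P$. Suppose both $x_1$ and $x_2$ go to vertices of the same cycle component $C$. Then for every spanning cycle $H$ of the subgraph of $G$ induced on $V(C)$, there are no vertices $a,b\in V(C)$ such that $x_1$ goes to $a$, $x_2$ goes to $b$, and $a,b$ are consecutive on $H$. Moreover, if $|V(C)|\le 6$, then the number of balanced edges between $\{x_1,x_2\}$ and $V(C)$ is at most $|V(C)|$ (equivalently, $\{x_1,x_2\}$ transfer in total at most $1$ point to $C$ when each such balanced edge carries $1/|V(C)|$ points).
   Context: All graphs are finite, simple and undirected. A path partition of $G=(V,E)$ is a set of vertex-disjoint paths (single vertices allowed) covering $V$; its members are components. A component with $t\ge3$ vertices is a cycle component if the subgraph induced on its vertex set has a spanning cycle; a one-vertex component is an isolated vertex; every other component is a path component. A path partition is canonical if (1) it has the minimum number of components among all path partitions of $G$; (2) among those, it has the maximum number of cycle components; (3) it has no isolated vertices. Given a canonical path partition $\mathcal S$ of $G$: two vertices are path neighbors if they are consecutive on a path component. An edge of $G$ is a free edge unless it joins two path neighbors or has both endpoints in the same cycle component. $V_1$ is the set of end-vertices of path components together with all vertices of cycle components. $V_2$ is the set of vertices not in $V_1$ that are joined by a free edge to a vertex of $V_1$. A balanced edge is a free edge with one endpoint in $V_1$ and the other in $V_2$; for $x\in V_2$, $y\in V_1$ we say $x$ goes to $y$ if $xy$ is a balanced edge. *)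

theory Defs
  imports Main
begin

definition simple_graph :: "'a set \<Rightarrow> ('a \<Rightarrow> 'a \<Rightarrow> bool) \<Rightarrow> bool" where
  "simple_graph V E \<longleftrightarrow> finite V \<and> (\<forall>u v. E u v \<longrightarrow> u \<in> V \<and> v \<in> V)
     \<and> (\<forall>u v. E u v \<longrightarrow> E v u) \<and> (\<forall>u. \<not> E u u)"

definition regular :: "nat \<Rightarrow> 'a set \<Rightarrow> ('a \<Rightarrow> 'a \<Rightarrow> bool) \<Rightarrow> bool" where
  "regular k V E \<longleftrightarrow> (\<forall>v\<in>V. card {u\<in>V. E v u} = k)"

definition is_path :: "'a set \<Rightarrow> ('a \<Rightarrow> 'a \<Rightarrow> bool) \<Rightarrow> 'a list \<Rightarrow> bool" where
  "is_path V E p \<longleftrightarrow> p \<noteq> [] \<and> distinct p \<and> set p \<subseteq> V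
     \<and> (\<forall>i. Suc i < length p \<longrightarrow> E (p ! i) (p ! Suc i))"

definition path_partition :: "'a set \<Rightarrow> ('a \<Rightarrow> 'a \<Rightarrow> bool) \<Rightarrow> 'a list set \<Rightarrow> bool" where
  "path_partition V E S \<longleftrightarrow> (\<forall>p\<in>S. is_path V E p)
     \<and> (\<forall>p\<in>S. \<forall>q\<in>S. p \<noteq> q \<longrightarrow> set p \<inter> set q = {})
     \<and> (\<Union>p\<in>S. set p) = V"

definition spanning_cycle :: "('a \<Rightarrow> 'a \<Rightarrow> bool) \<Rightarrow> 'a set \<Rightarrow> 'a list \<Rightarrow> bool" where
  "spanning_cycle E W H \<longleftrightarrow> distinct H \<and> set H = W \<and> 3 \<le> length H
     \<and> (\<forall>i<length H. E (H ! i) (H ! ((Suc i) mod length H)))"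

definition cycle_component :: "('a \<Rightarrow> 'a \<Rightarrow> bool) \<Rightarrow> 'a list \<Rightarrow> bool" where
  "cycle_component E p \<longleftrightarrow> 3 \<le> length p \<and> (\<exists>H. spanning_cycle E (set p) H)"

definition num_cycle_components :: "('a \<Rightarrow> 'a \<Rightarrow> bool) \<Rightarrow> 'a list set \<Rightarrow> nat" where
  "num_cycle_components E S = card {p\<in>S. cycle_component E p}"

definition canonical :: "'a set \<Rightarrow> ('a \<Rightarrow> 'a \<Rightarrow> bool) \<Rightarrow> 'a list set \<Rightarrow> bool" where
  "canonical V E S \<longleftrightarrow> path_partition V E S
     \<and> (\<forall>S'. path_partition V E S' \<longrightarrow> card S \<le> card S')
     \<and> (\<forall>S'. path_partition V E S' \<and> card S' = card S
            \<longrightarrow> num_cycle_components E S' \<le> num_cycle_components E S)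
     \<and> (\<forall>p\<in>S. length p \<noteq> 1)"

definition path_nbrs :: "('a \<Rightarrow> 'a \<Rightarrow> bool) \<Rightarrow> 'a list set \<Rightarrow> 'a \<Rightarrow> 'a \<Rightarrow> bool" where
  "path_nbrs E S u v \<longleftrightarrow> (\<exists>p\<in>S. \<not> cycle_component E p
     \<and> (\<exists>i. Suc i < length p \<and> {p ! i, p ! Suc i} = {u, v}))"

definition same_cycle :: "('a \<Rightarrow> 'a \<Rightarrow> bool) \<Rightarrow> 'a list set \<Rightarrow> 'a \<Rightarrow> 'a \<Rightarrow> bool" where
  "same_cycle E S u v \<longleftrightarrow> (\<exists>p\<in>S. cycle_component E p \<and> u \<in> set p \<and> v \<in> set p)"

definition free_edge :: "('a \<Rightarrow> 'a \<Rightarrow> bool) \<Rightarrow> 'a list set \<Rightarrow> 'a \<Rightarrow> 'a \<Rightarrow> bool" where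
  "free_edge E S u v \<longleftrightarrow> E u v \<and> \<not> path_nbrs E S u v \<and> \<not> same_cycle E S u v"

definition V1 :: "('a \<Rightarrow> 'a \<Rightarrow> bool) \<Rightarrow> 'a list set \<Rightarrow> 'a set" where
  "V1 E S = {v. \<exists>p\<in>S. (\<not> cycle_component E p \<and> (v = hd p \<or> v = last p))
                     \<or> (cycle_component E p \<and> v \<in> set p)}"

definition V2 :: "'a set \<Rightarrow> ('a \<Rightarrow> 'a \<Rightarrow> bool) \<Rightarrow> 'a list set \<Rightarrow> 'a set" where
  "V2 V E S = {x\<in>V. x \<notin> V1 E S \<and> (\<exists>y\<in>V1 E S. free_edge E S x y)}"

text \<open>x goes to y: xy is a balanced edge with x in V2 and y in V1.\<close>
definition goes_to :: "'a set \<Rightarrow> ('a \<Rightarrow> 'a \<Rightarrow> bool) \<Rightarrow> 'a list set \<Rightarrow> 'a \<Rightarrow> 'a \<Rightarrow> bool" where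
  "goes_to V E S x y \<longleftrightarrow> x \<in> V2 V E S \<and> y \<in> V1 E S \<and> free_edge E S x y"

definition consec_on_cycle :: "'a list \<Rightarrow> 'a \<Rightarrow> 'a \<Rightarrow> bool" where
  "consec_on_cycle H a b \<longleftrightarrow> (\<exists>i<length H. {H ! i, H ! ((Suc i) mod length H)} = {a, b})"

end

theory Submission imports Defs begin


lemma cyc_path1:
  assumes sc: "spanning_cycle E W H" and j: "j < length H"
  shows "\<exists>Q. distinct Q \<and> set Q = W \<and> Q \<noteq> [] \<and> hd Q = H!(Suc j mod length H)
           \<and> last Q = H!j \<and> successively E Q"
proof -
  let ?n = "length H"
  define Q where "Q = rotate (Suc j) H"
  have n3: "3 \<le> ?n" using sc unfolding spanning_cycle_def by auto
  have lq: "length Q = ?n" by (simp add: Q_def)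
  have "distinct Q" "set Q = W" using sc unfolding Q_def spanning_cycle_def by auto
  moreover have "Q \<noteq> []" using n3 lq by auto
  moreover have "hd Q = H!(Suc j mod ?n)"
  proof -
    have "hd Q = Q!0" using \<open>Q \<noteq> []\<close> by (simp add: hd_conv_nth)
    also have "\<dots> = H!((Suc j + 0) mod ?n)" unfolding Q_def using n3 by (intro nth_rotate) auto
    finally show ?thesis by simp
  qed
  moreover have "last Q = H!j"
  proof -
    have "last Q = Q!(?n - 1)" using \<open>Q \<noteq> []\<close> lq by (simp add: last_conv_nth)
    also have "\<dots> = H!((Suc j + (?n - 1)) mod ?n)" unfolding Q_def using n3 by (intro nth_rotate) auto
    also have "(Suc j + (?n - 1)) = j + ?n" using n3 by simp
    finally show ?thesis using j by simp
  qed
  moreover have "successively E Q"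
    unfolding successively_conv_nth
  proof (intro allI impI)
    fix i assume i: "Suc i < length Q"
    let ?m = "(Suc j + i) mod ?n"
    have m: "?m < ?n" using n3 by (intro mod_less_divisor) auto
    have "E (H ! ?m) (H ! (Suc ?m mod ?n))" using sc m unfolding spanning_cycle_def by blast
    moreover have "Suc ?m mod ?n = (Suc j + Suc i) mod ?n" by (simp add: mod_Suc_eq)
    moreover have "Q ! i = H ! ?m" unfolding Q_def using i lq by (intro nth_rotate) auto
    moreover have "Q ! Suc i = H ! ((Suc j + Suc i) mod ?n)" unfolding Q_def using i lq by (intro nth_rotate) auto
    ultimately show "E (Q ! i) (Q ! Suc i)" by simp
  qed
  ultimately show ?thesis by blast
qed

lemma cyc_path:
  assumes sc: "spanning_cycle E W H" and sym: "\<forall>u v. E u v \<longrightarrow> E v u"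
    and cc: "consec_on_cycle H a b"
  shows "\<exists>Q. distinct Q \<and> set Q = W \<and> Q \<noteq> [] \<and> hd Q = a \<and> last Q = b \<and> successively E Q"
proof -
  obtain j where j: "j < length H" and e: "{H ! j, H ! (Suc j mod length H)} = {a, b}"
    using cc unfolding consec_on_cycle_def by blast
  obtain Q where Q: "distinct Q" "set Q = W" "Q \<noteq> []" "hd Q = H!(Suc j mod length H)"
           "last Q = H!j" "successively E Q" using cyc_path1[OF sc j] by blast
  from e have "(H!j = a \<and> H!(Suc j mod length H) = b) \<or> (H!j = b \<and> H!(Suc j mod length H) = a)"
    by (auto simp: doubleton_eq_iff)
  then show ?thesis
  proof
    assume h: "H!j = a \<and> H!(Suc j mod length H) = b"
    have "successively E (rev Q)"
      using Q(6) sym by (auto intro: successively_mono)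
    then show ?thesis using Q h by (intro exI[of _ "rev Q"]) (auto simp: hd_rev last_rev)
  next
    assume "H!j = b \<and> H!(Suc j mod length H) = a"
    then show ?thesis using Q by blast
  qed
qed

lemma finite_S:
  assumes "path_partition V E S" "finite V"
  shows "finite S"
proof -
  have inj: "inj_on set S"
  proof (rule inj_onI)
    fix p q assume "p \<in> S" "q \<in> S" "set p = set q"
    moreover have "p \<noteq> []" using \<open>p \<in> S\<close> assms(1) unfolding path_partition_def is_path_def by auto
    ultimately show "p = q" using assms(1) unfolding path_partition_def by (metis Int_absorb set_empty)
  qed
  have "set ` S \<subseteq> Pow V" using assms(1) unfolding path_partition_def by auto
  then have "finite (set ` S)" using assms(2) by (meson finite_Pow_iff rev_finite_subset)
  then show ?thesis using inj finite_imageD by blast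
qed


lemma no_merge:
  assumes g: "simple_graph V E" and can: "canonical V E S"
    and P: "P \<in> S" "\<not> cycle_component E P" and i: "Suc i < length P"
    and C: "C \<in> S" "cycle_component E C"
    and H: "spanning_cycle E (set C) H"
    and ga: "goes_to V E S (P!i) a" and gb: "goes_to V E S (P!Suc i) b"
    and cc: "consec_on_cycle H a b"
  shows False
proof -
  have pp: "path_partition V E S" using can unfolding canonical_def by blast
  have finV: "finite V" and sym: "\<forall>u v. E u v \<longrightarrow> E v u"
    using g unfolding simple_graph_def by auto
  have finS: "finite S" using finite_S[OF pp finV] .
  have PC: "P \<noteq> C" using P C by auto
  have disj: "set P \<inter> set C = {}" using pp P C PC unfolding path_partition_def by blast
  have pathP: "is_path V E P" using pp P unfolding path_partition_def by blast
  have pathC: "is_path V E C" using pp C unfolding path_partition_def by blast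
  obtain Q where Q: "distinct Q" "set Q = set C" "Q \<noteq> []" "hd Q = a" "last Q = b" "successively E Q"
    using cyc_path[OF H sym cc] by blast
  have Ea: "E (P!i) a" using ga unfolding goes_to_def free_edge_def by blast
  have Eb: "E b (P!Suc i)" using gb sym unfolding goes_to_def free_edge_def by blast
  define T where "T = take (Suc i) P"
  define D where "D = drop (Suc i) P"
  define N where "N = T @ Q @ D"
  have TD: "T @ D = P" unfolding T_def D_def by simp
  have setP: "set P = set T \<union> set D" using TD by (metis set_append)
  have setN: "set N = set P \<union> set C" unfolding N_def using setP Q(2) by auto
  have dP: "distinct P" using pathP unfolding is_path_def by blast
  have dN: "distinct N"
  proof -
    have "distinct (T @ D)" using dP TD by simp
    then show ?thesis using Q(1,2) disj setP unfolding N_def by auto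
  qed
  have sP: "successively E P" using pathP unfolding is_path_def successively_conv_nth by blast
  hence sT: "successively E T" and sD: "successively E D"
    using TD successively_append_iff by metis+
  have lT: "last T = P!i" unfolding T_def using i by (simp add: take_Suc_conv_app_nth)
  have hD: "hd D = P!Suc i" unfolding D_def using i by (simp add: hd_drop_conv_nth)
  have TnE: "T \<noteq> []" unfolding T_def using i by auto
  have DnE: "D \<noteq> []" unfolding D_def using i by simp
  have sQD: "successively E (Q @ D)" using sD Q DnE Eb hD by (simp add: successively_append_iff)
  have sN: "successively E N" unfolding N_def using sT sQD TnE Q(3,4) Ea lT
    by (simp add: successively_append_iff)
  have setPV: "set P \<subseteq> V" "set C \<subseteq> V" using pathP pathC unfolding is_path_def by auto
  have pathN: "is_path V E N"
  proof -
    have "N \<noteq> []" unfolding N_def using TnE by simp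
    moreover have "set N \<subseteq> V" using setN setPV by auto
    moreover have "\<forall>i. Suc i < length N \<longrightarrow> E (N ! i) (N ! Suc i)"
      using sN successively_conv_nth by metis
    ultimately show ?thesis unfolding is_path_def using dN by blast
  qed
  define S' where "S' = insert N (S - {P, C})"
  have ppS': "path_partition V E S'"
    unfolding path_partition_def
  proof (intro conjI)
    show "\<forall>p\<in>S'. is_path V E p" using pathN pp unfolding S'_def path_partition_def by auto
    show "\<forall>p\<in>S'. \<forall>q\<in>S'. p \<noteq> q \<longrightarrow> set p \<inter> set q = {}"
    proof (intro ballI impI)
      fix p q assume p: "p \<in> S'" and q: "q \<in> S'" and pq: "p \<noteq> q"
      have dd: "\<And>r. r \<in> S - {P,C} \<Longrightarrow> set N \<inter> set r = {}"
        using pp P(1) C(1) setN unfolding path_partition_def by blast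
      show "set p \<inter> set q = {}"
        using p q pq dd pp unfolding S'_def path_partition_def by blast
    qed
    have u1: "(\<Union>p\<in>S. set p) = set P \<union> set C \<union> (\<Union>p\<in>S-{P,C}. set p)"
      using P(1) C(1) by blast
    have u2: "(\<Union>p\<in>S'. set p) = set N \<union> (\<Union>p\<in>S-{P,C}. set p)"
      by (simp add: S'_def)
    show "(\<Union>p\<in>S'. set p) = V"
      using pp u1 u2 setN unfolding path_partition_def by simp
  qed
  have "card S' \<le> Suc (card (S - {P, C}))" unfolding S'_def
    using finS by (simp add: card_insert_if)
  also have "card (S - {P, C}) = card S - 2" using finS P(1) C(1) PC by (simp add: card_Diff_subset)
  also have "card S \<ge> 2" using finS P(1) C(1) PC
  proof -
    have "card {P, C} \<le> card S" using finS P(1) C(1) by (intro card_mono) auto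
    then show ?thesis using PC by simp
  qed
  hence "Suc (card S - 2) < card S" by simp
  finally have "card S' < card S" .
  moreover have "card S \<le> card S'" using can ppS' unfolding canonical_def by blast
  ultimately show False by simp
qed


lemma part1:
  assumes g: "simple_graph V E" and can: "canonical V E S"
    and pn: "path_nbrs E S x1 x2"
    and C: "C \<in> S" "cycle_component E C"
    and H: "spanning_cycle E (set C) H"
    and ga: "goes_to V E S x1 a" and gb: "goes_to V E S x2 b"
    and cc: "consec_on_cycle H a b"
  shows False
proof -
  obtain P i where P: "P \<in> S" "\<not> cycle_component E P" and i: "Suc i < length P"
    and e: "{P ! i, P ! Suc i} = {x1, x2}"
    using pn unfolding path_nbrs_def by blast
  have cc': "consec_on_cycle H b a" using cc unfolding consec_on_cycle_def by (simp add: insert_commute)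
  from e have "(P!i = x1 \<and> P!Suc i = x2) \<or> (P!i = x2 \<and> P!Suc i = x1)"
    by (auto simp: doubleton_eq_iff)
  then show False
  proof
    assume "P!i = x1 \<and> P!Suc i = x2"
    then show False using no_merge[OF g can P i C H _ _ cc] ga gb by simp
  next
    assume "P!i = x2 \<and> P!Suc i = x1"
    then show False using no_merge[OF g can P i C H _ _ cc'] ga gb by simp
  qed
qed

theorem mainTheorem10:
  fixes V :: "'a set" and E :: "'a \<Rightarrow> 'a \<Rightarrow> bool" and S :: "'a list set"
    and x1 x2 :: 'a and C :: "'a list"
  assumes "simple_graph V E"
    and "regular 6 V E"
    and "canonical V E S"
    and "x1 \<in> V2 V E S" and "x2 \<in> V2 V E S"
    and "path_nbrs E S x1 x2"
    and "C \<in> S" and "cycle_component E C"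
    and "\<exists>a\<in>set C. goes_to V E S x1 a"
    and "\<exists>b\<in>set C. goes_to V E S x2 b"
  shows "(\<forall>H. spanning_cycle E (set C) H \<longrightarrow>
            \<not> (\<exists>a\<in>set C. \<exists>b\<in>set C. goes_to V E S x1 a \<and> goes_to V E S x2 b
                                  \<and> consec_on_cycle H a b))
         \<and> (card (set C) \<le> 6 \<longrightarrow>
            card {(x, c). x \<in> {x1, x2} \<and> c \<in> set C \<and> goes_to V E S x c} \<le> card (set C))"
proof -
  have p1: "\<And>H a b. spanning_cycle E (set C) H \<Longrightarrow> goes_to V E S x1 a \<Longrightarrow> goes_to V E S x2 b
      \<Longrightarrow> consec_on_cycle H a b \<Longrightarrow> False"
    using part1[OF assms(1,3,6,7,8)] by blast
  obtain H where H: "spanning_cycle E (set C) H"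
    using assms(8) unfolding cycle_component_def by blast
  define n where "n = length H"
  have dH: "distinct H" and sH: "set H = set C" and n3: "3 \<le> n"
    using H unfolding spanning_cycle_def n_def by auto
  define A where "A = {c \<in> set C. goes_to V E S x1 c}"
  define B where "B = {c \<in> set C. goes_to V E S x2 c}"
  define IA where "IA = {k. k < n \<and> H!k \<in> A}"
  define f where "f = (\<lambda>k. H ! (Suc k mod n))"
  have injH: "inj_on (nth H) {..<n}" using dH by (intro inj_on_nth) (auto simp: n_def)
  have AIA: "A = (nth H) ` IA"
  proof
    show "A \<subseteq> (nth H) ` IA"
    proof
      fix c assume c: "c \<in> A"
      then have "c \<in> set H" using sH A_def by auto
      then obtain k where "k < n" "H!k = c" by (auto simp: in_set_conv_nth n_def)
      then show "c \<in> (nth H) ` IA" using c IA_def by auto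
    qed
    show "(nth H) ` IA \<subseteq> A" using IA_def by auto
  qed
  have cA: "card A = card IA"
    unfolding AIA by (rule card_image, rule inj_on_subset[OF injH]) (auto simp: IA_def)
  have injS: "inj_on (\<lambda>k. Suc k mod n) {..<n}"
  proof (rule inj_onI)
    fix k l assume "k \<in> {..<n}" "l \<in> {..<n}" "Suc k mod n = Suc l mod n"
    moreover have "\<And>k. k < n \<Longrightarrow> Suc k mod n = (if Suc k = n then 0 else Suc k)"
      by auto
    ultimately show "k = l" by (auto split: if_splits)
  qed
  have injf: "inj_on f IA"
  proof -
    have "inj_on (nth H \<circ> (\<lambda>k. Suc k mod n)) {..<n}"
    proof (rule comp_inj_on[OF injS])
      have "(\<lambda>k. Suc k mod n) ` {..<n} \<subseteq> {..<n}" using n3 by auto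
      then show "inj_on (nth H) ((\<lambda>k. Suc k mod n) ` {..<n})" using inj_on_subset[OF injH] by blast
    qed
    then show ?thesis unfolding f_def o_def by (rule inj_on_subset) (auto simp: IA_def)
  qed
  have fIA: "f ` IA \<subseteq> set C"
  proof
    fix c assume "c \<in> f ` IA"
    then obtain k where "c = H ! (Suc k mod n)" by (auto simp: f_def)
    moreover have "Suc k mod n < n" using n3 by simp
    ultimately show "c \<in> set C" using sH nth_mem[of "Suc k mod n" H] by (simp add: n_def)
  qed
  have disjf: "f ` IA \<inter> B = {}"
  proof (rule ccontr)
    assume "f ` IA \<inter> B \<noteq> {}"
    then obtain k where k: "k < n" "H!k \<in> A" "H ! (Suc k mod n) \<in> B"
      by (auto simp: f_def IA_def)
    have "consec_on_cycle H (H!k) (H ! (Suc k mod n))"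
      unfolding consec_on_cycle_def using k(1) by (auto simp: n_def)
    then show False using p1[OF H] k A_def B_def by blast
  qed
  have finC: "finite (set C)" by simp
  have "card A + card B = card (f ` IA) + card B" using cA card_image[OF injf] by simp
  also have "\<dots> = card (f ` IA \<union> B)"
    using disjf finC fIA B_def by (intro card_Un_disjoint[symmetric]) (auto intro: finite_subset)
  also have "\<dots> \<le> card (set C)" using fIA B_def by (intro card_mono) auto
  finally have AB: "card A + card B \<le> card (set C)" .
  have "{(x, c). x \<in> {x1, x2} \<and> c \<in> set C \<and> goes_to V E S x c} = ({x1} \<times> A) \<union> ({x2} \<times> B)"
    unfolding A_def B_def by auto
  then have "card {(x, c). x \<in> {x1, x2} \<and> c \<in> set C \<and> goes_to V E S x c} \<le> card A + card B"
    using card_Un_le[of "{x1} \<times> A" "{x2} \<times> B"] by (simp add: card_cartesian_product_singleton)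
  then have part2: "card {(x, c). x \<in> {x1, x2} \<and> c \<in> set C \<and> goes_to V E S x c} \<le> card (set C)"
    using AB by linarith
  show ?thesis
  proof (intro conjI impI allI)
    fix H' assume "spanning_cycle E (set C) H'"
    then show "\<not> (\<exists>a\<in>set C. \<exists>b\<in>set C. goes_to V E S x1 a \<and> goes_to V E S x2 b
                                  \<and> consec_on_cycle H' a b)" using p1 by blast
  next
    show "card {(x, c). x \<in> {x1, x2} \<and> c \<in> set C \<and> goes_to V E S x c} \<le> card (set C)"
      by (rule part2)
  qed
qed

end
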